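(* Let $\varphi:(-1,1)\to\mathbb{R}^n$ be a $C^3$ curve with $\varphi'\neq0$. (i) If $S_1\varphi(x)\le \pi^2/2$ for all $x\in(-1,1)$, then for all $x_1,x_2\in(-1,1)$, $$\frac{|\varphi(x_1)-\varphi(x_2)|}{\{|\varphi'(x_1)||\varphi'(x_2)|\}^{1/2}}\ge \frac{2}{\pi}\sin\Big(\frac{\pi}{2}|x_1-x_2|\Big).$$ (ii) If $S_1\varphi(x)\le 2(1-x^2)^{-2}$ for all $x\in(-1,1)$, then for all $x_1,x_2\in(-1,1)$, $$\frac{|\varphi(x_1)-\varphi(x_2)|}{\{|\varphi'(x_1)||\varphi'(x_2)|\}^{1/2}}\ge \sqrt{(1-x_1^2)(1-x_2^2)}\;d(x_1,x_2),$$ where $d(x_1,x_2)=\big|\tfrac12\log\tfrac{1+x_1}{1-x_1}-\tfrac12\log\tfrac{1+x_2}{1-x_2}\big|$.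
   Context: For a $C^3$ curve $\varphi$ into $\mathbb{R}^n$ with $\varphi'\neq0$, the Ahlfors Schwarzian is $S_1\varphi=\frac{\langle\varphi',\varphi'''\rangle}{|\varphi'|^2}-3\frac{\langle\varphi',\varphi''\rangle^2}{|\varphi'|^4}+\frac32\frac{|\varphi''|^2}{|\varphi'|^2}$, with Euclidean inner product and norm. *)

theory Defs
  imports "HOL-Analysis.Analysis"
begin

definition vd :: "(real \<Rightarrow> 'a::real_normed_vector) \<Rightarrow> real \<Rightarrow> 'a" where
  "vd f = (\<lambda>x. vector_derivative f (at x))"

definition C3_on :: "(real \<Rightarrow> 'a::real_normed_vector) \<Rightarrow> real set \<Rightarrow> bool" where
  "C3_on f S \<longleftrightarrow>
     (\<forall>x\<in>S. f differentiable (at x)) \<and>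
     (\<forall>x\<in>S. vd f differentiable (at x)) \<and>
     (\<forall>x\<in>S. vd (vd f) differentiable (at x)) \<and>
     continuous_on S (vd (vd (vd f)))"

definition ahlfors_S1 :: "(real \<Rightarrow> 'a::real_inner) \<Rightarrow> real \<Rightarrow> real" where
  "ahlfors_S1 f x =
     (let d1 = vd f x; d2 = vd (vd f) x; d3 = vd (vd (vd f)) x in
       inner d1 d3 / (norm d1)\<^sup>2 - 3 * (inner d1 d2)\<^sup>2 / (norm d1) ^ 4
       + 3 / 2 * (norm d2)\<^sup>2 / (norm d1)\<^sup>2)"

definition hdist :: "real \<Rightarrow> real \<Rightarrow> real" where
  "hdist x1 x2 = \<bar>1/2 * ln ((1 + x1) / (1 - x1)) - 1/2 * ln ((1 + x2) / (1 - x2))\<bar>"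

end

theory Submission
  imports Defs
begin

lemma algE:
  fixes D A B C :: "'a::real_inner"
  assumes P: "D \<bullet> D > 0" and Q: "A \<bullet> A > 0"
  shows "((D\<bullet>A)/(D\<bullet>D) - (A\<bullet>B)/(2*(A\<bullet>A)))\<^sup>2
       + ((A\<bullet>A + D\<bullet>B)/(D\<bullet>D) - 2*(D\<bullet>A)\<^sup>2/(D\<bullet>D)\<^sup>2 - (B\<bullet>B + A\<bullet>C)/(2*(A\<bullet>A)) + (A\<bullet>B)\<^sup>2/(A\<bullet>A)\<^sup>2)
       + ((A\<bullet>C)/(A\<bullet>A) - 3*(A\<bullet>B)\<^sup>2/(A\<bullet>A)\<^sup>2 + 3/2*(B\<bullet>B)/(A\<bullet>A))/2 \<ge> 0"
proof -
  define P where "P = D\<bullet>D"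
  define Q where "Q = A\<bullet>A"
  define \<alpha> where "\<alpha> = D\<bullet>A"
  define \<beta> where "\<beta> = D\<bullet>B"
  define m where "m = A\<bullet>B"
  define n where "n = B\<bullet>B"
  define V where "V = B - (m/Q + 2*\<alpha>/P) *\<^sub>R A + (2*Q/P) *\<^sub>R D"
  have P0: "P > 0" "Q > 0" using assms by (auto simp: P_def Q_def)
  have "V \<bullet> V = n + (m/Q + 2*\<alpha>/P)^2 * Q + (2*Q/P)^2 * P - 2*(m/Q + 2*\<alpha>/P)*m
        + 2*(2*Q/P)*\<beta> - 2*(m/Q + 2*\<alpha>/P)*(2*Q/P)*\<alpha>"
    unfolding V_def by (simp add: inner_simps P_def Q_def \<alpha>_def \<beta>_def m_def n_def inner_commute power2_eq_square algebra_simps)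
  also have "\<dots> = 4*Q*((\<alpha>/P - m/(2*Q))\<^sup>2
       + ((Q + \<beta>)/P - 2*\<alpha>\<^sup>2/P\<^sup>2 - (n + (A\<bullet>C))/(2*Q) + m\<^sup>2/Q\<^sup>2)
       + ((A\<bullet>C)/Q - 3*m\<^sup>2/Q\<^sup>2 + 3/2*n/Q)/2)"
    using P0 by (simp add: field_simps power2_eq_square)
  finally have VV: "V \<bullet> V = 4*Q*((\<alpha>/P - m/(2*Q))\<^sup>2
       + ((Q + \<beta>)/P - 2*\<alpha>\<^sup>2/P\<^sup>2 - (n + (A\<bullet>C))/(2*Q) + m\<^sup>2/Q\<^sup>2)
       + ((A\<bullet>C)/Q - 3*m\<^sup>2/Q\<^sup>2 + 3/2*n/Q)/2)" .
  have "0 \<le> V \<bullet> V" by simp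
  with VV P0 have G: "0 \<le> ((\<alpha>/P - m/(2*Q))\<^sup>2
       + ((Q + \<beta>)/P - 2*\<alpha>\<^sup>2/P\<^sup>2 - (n + (A\<bullet>C))/(2*Q) + m\<^sup>2/Q\<^sup>2)
       + ((A\<bullet>C)/Q - 3*m\<^sup>2/Q\<^sup>2 + 3/2*n/Q)/2)" by (simp add: zero_le_mult_iff)
  then show ?thesis unfolding P_def Q_def \<alpha>_def \<beta>_def m_def n_def .
qed

lemma mono_open:
  fixes f f' :: "real \<Rightarrow> real"
  assumes "a \<le> s" "s \<le> t" "t < c"
    and d: "\<And>x. a<x \<Longrightarrow> x<c \<Longrightarrow> (f has_real_derivative f' x) (at x)"
    and nn: "\<And>x. a<x \<Longrightarrow> x<c \<Longrightarrow> f' x \<ge> 0"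
    and "a < s"
  shows "f s \<le> f t"
proof (rule DERIV_nonneg_imp_increasing_open[OF \<open>s\<le>t\<close>])
  fix x assume "s < x" "x < t"
  then show "\<exists>y. (f has_real_derivative y) (at x) \<and> 0 \<le> y"
    using assms by (intro exI[of _ "f' x"]) auto
next
  show "continuous_on {s..t} f"
    using assms by (intro continuous_at_imp_continuous_on ballI DERIV_isCont[OF d]) auto
qed

lemma sturmB:
  fixes L L1 L2 y y1 p :: "real \<Rightarrow> real"
  assumes ac: "a < c"
  and dL: "\<And>t. a<t \<Longrightarrow> t<c \<Longrightarrow> (L has_real_derivative L1 t) (at t)"
  and dL1: "\<And>t. a<t \<Longrightarrow> t<c \<Longrightarrow> (L1 has_real_derivative L2 t) (at t)"
  and dy: "\<And>t. a<t \<Longrightarrow> t<c \<Longrightarrow> (y has_real_derivative y1 t) (at t)"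
  and dy1: "\<And>t. a<t \<Longrightarrow> t<c \<Longrightarrow> (y1 has_real_derivative - p t * y t) (at t)"
  and ineq: "\<And>t. a<t \<Longrightarrow> t<c \<Longrightarrow> (L1 t)\<^sup>2 + L2 t + p t \<ge> 0"
  and ypos: "\<And>t. a<t \<Longrightarrow> t<c \<Longrightarrow> y t > 0"
  and limz: "((\<lambda>t. exp (L t) / y t) \<longlongrightarrow> K) (at_right a)" and K: "K > 0"
  and limA: "((\<lambda>t. (exp (L t))\<^sup>2 * L1 t) \<longlongrightarrow> 0) (at_right a)"
  and limB: "((\<lambda>t. exp (L t)) \<longlongrightarrow> 0) (at_right a)"
  and limy1: "(y1 \<longlongrightarrow> y1a) (at_right a)"
  and t: "a < t" "t < c"
  shows "exp (L t) \<ge> K * y t"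
proof -
  define W where "W t = exp (L t) * (L1 t * y t - y1 t)" for t
  have dW: "(W has_real_derivative exp (L t) * y t * ((L1 t)\<^sup>2 + L2 t + p t)) (at t)"
    if "a<t" "t<c" for t
    unfolding W_def
    by (rule derivative_eq_intros dL dL1 dy dy1 that refl | simp)+
       (simp add: algebra_simps power2_eq_square)
  have nnW: "0 \<le> exp (L x) * y x * ((L1 x)\<^sup>2 + L2 x + p x)" if "a<x" "x<c" for x
    using ypos[OF that] ineq[OF that] by (intro mult_nonneg_nonneg) auto
  have Wmono: "W s \<le> W t" if "a < s" "s \<le> t" "t < c" for s t
    by (rule mono_open[OF _ that(2,3) dW _ that(1)])
       (use that nnW in auto)
  have "((\<lambda>t. (exp (L t))\<^sup>2 * L1 t * inverse (exp (L t) / y t) - exp (L t) * y1 t) \<longlongrightarrow> 0 * inverse K - 0 * y1a) (at_right a)"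
    by (intro tendsto_intros limA limz limB limy1) (use K in auto)
  moreover have "\<forall>\<^sub>F s in at_right a. (exp (L s))\<^sup>2 * L1 s * inverse (exp (L s) / y s) - exp (L s) * y1 s = W s"
    unfolding eventually_at_right_field
    by (intro exI[of _ c]) (use ac ypos in \<open>auto simp: W_def field_simps power2_eq_square\<close>)
  ultimately have Wlim: "(W \<longlongrightarrow> 0) (at_right a)"
    by (simp add: tendsto_cong)
  have W0: "W t \<ge> 0" if "a < t" "t < c" for t
  proof (rule tendsto_le[OF _ tendsto_const Wlim])
    show "\<forall>\<^sub>F s in at_right a. W s \<le> W t"
      unfolding eventually_at_right_field
      by (intro exI[of _ t]) (use that Wmono in auto)
  qed simp
  define z where "z t = exp (L t) / y t" for t
  have dz: "(z has_real_derivative W t / (y t)\<^sup>2) (at t)" if "a<t" "t<c" for t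
  proof -
    have yp: "y t \<noteq> 0" using ypos[OF that] by simp
    show ?thesis unfolding z_def
      by (rule derivative_eq_intros dL dy that refl | simp add: yp)+
         (simp add: W_def power2_eq_square algebra_simps)
  qed
  have zmono: "z s \<le> z t" if "a < s" "s \<le> t" "t < c" for s t
    by (rule mono_open[OF _ that(2,3) dz _ that(1)])
       (use that W0 in auto)
  have "K \<le> z t"
  proof (rule tendsto_le[OF _ tendsto_const limz[folded z_def]])
    show "\<forall>\<^sub>F s in at_right a. z s \<le> z t"
      unfolding eventually_at_right_field
      by (intro exI[of _ t]) (use t zmono in auto)
  qed simp
  then show ?thesis using ypos[OF t] by (simp add: z_def field_simps)
qed

lemma inner_deriv:
  fixes f g :: "real \<Rightarrow> 'a::real_inner"
  assumes "(f has_vector_derivative f') (at t)" "(g has_vector_derivative g') (at t)"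
  shows "((\<lambda>x. f x \<bullet> g x) has_real_derivative (f t \<bullet> g' + f' \<bullet> g t)) (at t)"
  using has_derivative_inner[OF assms[unfolded has_vector_derivative_def]]
  unfolding has_field_derivative_def
  by (rule has_derivative_eq_rhs) (auto simp: fun_eq_iff algebra_simps)

lemma N1:
  fixes \<phi> :: "real \<Rightarrow> 'a::real_normed_vector"
  assumes "(\<phi> has_vector_derivative v) (at a)"
  shows "((\<lambda>t. norm (\<phi> t - \<phi> a) / (t - a)) \<longlongrightarrow> norm v) (at_right a)"
proof -
  have "((\<lambda>y. norm (\<phi> y - \<phi> a - (y - a) *\<^sub>R v) / norm (y - a)) \<longlongrightarrow> 0) (at a)"
    using assms unfolding has_vector_derivative_def has_derivative_iff_norm by auto
  then have l: "((\<lambda>y. norm (\<phi> y - \<phi> a - (y - a) *\<^sub>R v) / norm (y - a)) \<longlongrightarrow> 0) (at_right a)"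
    using tendsto_mono[OF at_le[of "{a<..}" UNIV]] by auto
  have "((\<lambda>t. norm (\<phi> t - \<phi> a) / (t - a) - norm v) \<longlongrightarrow> 0) (at_right a)"
  proof (rule Lim_null_comparison[OF _ l])
    show "\<forall>\<^sub>F t in at_right a. norm (norm (\<phi> t - \<phi> a) / (t - a) - norm v)
          \<le> norm (\<phi> t - \<phi> a - (t - a) *\<^sub>R v) / norm (t - a)"
      unfolding eventually_at_right_field
    proof (intro exI[of _ "a+1"] allI impI conjI)
      fix t assume t: "a < t" "t < a + 1"
      have nn: "norm ((t - a) *\<^sub>R v) = (t - a) * norm v" using t by simp
      have e: "norm (\<phi> t - \<phi> a) / (t - a) - norm v
          = (norm (\<phi> t - \<phi> a) - norm ((t - a) *\<^sub>R v)) / (t - a)"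
        using t by (simp only: nn) (simp add: field_simps)
      have "norm (norm (\<phi> t - \<phi> a) / (t - a) - norm v)
          = \<bar>norm (\<phi> t - \<phi> a) - norm ((t - a) *\<^sub>R v)\<bar> / (t - a)"
        unfolding e using t by simp
      also have "\<dots> \<le> norm (\<phi> t - \<phi> a - (t - a) *\<^sub>R v) / (t - a)"
        using t by (intro divide_right_mono norm_triangle_ineq3) auto
      finally show "norm (norm (\<phi> t - \<phi> a) / (t - a) - norm v)
          \<le> norm (\<phi> t - \<phi> a - (t - a) *\<^sub>R v) / norm (t - a)" using t by simp
    qed simp
  qed
  then show ?thesis by (simp add: LIM_zero_iff)
qed

lemma exp_half_ln: "x > 0 \<Longrightarrow> exp (ln x / 2) = sqrt x"
  by (simp add: powr_half_sqrt[symmetric] powr_def)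

lemma expL:
  fixes D A :: "'a::real_inner"
  assumes "D \<noteq> 0" "A \<noteq> 0"
  shows "exp (ln (D \<bullet> D) / 2 - ln (A \<bullet> A) / 4) = norm D / sqrt (norm A)"
proof -
  have "ln (D \<bullet> D) / 2 = ln (norm D)"
    using assms by (simp add: power2_norm_eq_inner[symmetric] ln_realpow)
  moreover have "ln (A \<bullet> A) / 4 = ln (norm A) / 2"
    using assms by (simp add: power2_norm_eq_inner[symmetric] ln_realpow)
  ultimately show ?thesis using assms
    by (simp add: exp_diff exp_half_ln)
qed

lemma half_aux: "0 \<le> (a::real) + b + s/2 \<Longrightarrow> s \<le> 2*q \<Longrightarrow> 0 \<le> a + b + q"
  by linarith

lemma div_cancel_aux: "d \<noteq> 0 \<Longrightarrow> (u/d)/s/(v/d) = u/s/(v::real)"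
  by (cases "v=0"; cases "s=0") (auto simp: field_simps)

lemma coreC:
  fixes \<phi> \<phi>1 \<phi>2 \<phi>3 :: "real \<Rightarrow> 'a::real_inner" and y y1 p :: "real \<Rightarrow> real"
  assumes ac: "a < c"
    and d0: "\<And>t. a \<le> t \<Longrightarrow> t \<le> c \<Longrightarrow> (\<phi> has_vector_derivative \<phi>1 t) (at t)"
    and d1: "\<And>t. a \<le> t \<Longrightarrow> t \<le> c \<Longrightarrow> (\<phi>1 has_vector_derivative \<phi>2 t) (at t)"
    and d2: "\<And>t. a \<le> t \<Longrightarrow> t \<le> c \<Longrightarrow> (\<phi>2 has_vector_derivative \<phi>3 t) (at t)"
    and nz: "\<And>t. a \<le> t \<Longrightarrow> t \<le> c \<Longrightarrow> \<phi>1 t \<noteq> 0"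
    and S: "\<And>t. a \<le> t \<Longrightarrow> t \<le> c \<Longrightarrow>
        (\<phi>1 t \<bullet> \<phi>3 t)/(\<phi>1 t \<bullet> \<phi>1 t) - 3*(\<phi>1 t \<bullet> \<phi>2 t)\<^sup>2/(\<phi>1 t \<bullet> \<phi>1 t)\<^sup>2
          + 3/2*(\<phi>2 t \<bullet> \<phi>2 t)/(\<phi>1 t \<bullet> \<phi>1 t) \<le> 2 * p t"
    and dy: "\<And>t. a \<le> t \<Longrightarrow> t \<le> c \<Longrightarrow> (y has_real_derivative y1 t) (at t)"
    and dy1: "\<And>t. a \<le> t \<Longrightarrow> t \<le> c \<Longrightarrow> (y1 has_real_derivative - p t * y t) (at t)"
    and ya: "y a = 0" and y1a: "y1 a = 1"
    and ypos: "\<And>t. a < t \<Longrightarrow> t \<le> c \<Longrightarrow> y t > 0"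
    and Dnz: "\<And>t. a < t \<Longrightarrow> t < c \<Longrightarrow> \<phi> t \<noteq> \<phi> a"
  shows "norm (\<phi> c - \<phi> a) / sqrt (norm (\<phi>1 c)) \<ge> sqrt (norm (\<phi>1 a)) * y c"
proof -
  define D where "D t = \<phi> t - \<phi> a" for t
  define P where "P t = D t \<bullet> D t" for t
  define Q where "Q t = \<phi>1 t \<bullet> \<phi>1 t" for t
  define L where "L t = ln (P t) / 2 - ln (Q t) / 4" for t
  define L1 where "L1 t = (D t \<bullet> \<phi>1 t)/(P t) - (\<phi>1 t \<bullet> \<phi>2 t)/(2*(Q t))" for t
  define L2 where "L2 t = (Q t + D t \<bullet> \<phi>2 t)/(P t) - 2*(D t \<bullet> \<phi>1 t)\<^sup>2/(P t)\<^sup>2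
      - (\<phi>2 t \<bullet> \<phi>2 t + \<phi>1 t \<bullet> \<phi>3 t)/(2*(Q t)) + (\<phi>1 t \<bullet> \<phi>2 t)\<^sup>2/(Q t)\<^sup>2" for t
  define K where "K = sqrt (norm (\<phi>1 a))"
  have dD: "(D has_vector_derivative \<phi>1 t) (at t)" if "a \<le> t" "t \<le> c" for t
    unfolding D_def using d0[OF that] by (auto intro!: derivative_eq_intros)
  have Dnz': "D t \<noteq> 0" if "a < t" "t < c" for t
    using Dnz[OF that] by (simp add: D_def)
  have Ppos: "P t > 0" if "a < t" "t < c" for t
    using Dnz'[OF that] by (simp add: P_def)
  have Qpos: "Q t > 0" if "a \<le> t" "t \<le> c" for t
    using nz[OF that] by (simp add: Q_def)
  have dP: "(P has_real_derivative 2 * (D t \<bullet> \<phi>1 t)) (at t)" if "a \<le> t" "t \<le> c" for t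
    unfolding P_def using inner_deriv[OF dD[OF that] dD[OF that]] by (simp add: inner_commute)
  have dQ: "(Q has_real_derivative 2 * (\<phi>1 t \<bullet> \<phi>2 t)) (at t)" if "a \<le> t" "t \<le> c" for t
    unfolding Q_def using inner_deriv[OF d1[OF that] d1[OF that]] by (simp add: inner_commute)
  have d\<alpha>: "((\<lambda>t. D t \<bullet> \<phi>1 t) has_real_derivative (Q t + D t \<bullet> \<phi>2 t)) (at t)" if "a \<le> t" "t \<le> c" for t
    unfolding Q_def using inner_deriv[OF dD[OF that] d1[OF that]] by (simp add: algebra_simps)
  have dm: "((\<lambda>t. \<phi>1 t \<bullet> \<phi>2 t) has_real_derivative (\<phi>2 t \<bullet> \<phi>2 t + \<phi>1 t \<bullet> \<phi>3 t)) (at t)" if "a \<le> t" "t \<le> c" for t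
    using inner_deriv[OF d1[OF that] d2[OF that]] by (simp add: algebra_simps)
  have dL: "(L has_real_derivative L1 t) (at t)" if "a < t" "t < c" for t
  proof -
    have t: "a \<le> t" "t \<le> c" using that by auto
    have nz: "P t \<noteq> 0" "Q t \<noteq> 0" "P t > 0" "Q t > 0" using Ppos[OF that] Qpos[OF t] by auto
    show ?thesis unfolding L_def L1_def
      by (rule derivative_eq_intros dP[OF t] dQ[OF t] refl | simp add: nz)+
  qed
  have dL1: "(L1 has_real_derivative L2 t) (at t)" if "a < t" "t < c" for t
  proof -
    have t: "a \<le> t" "t \<le> c" using that by auto
    have nz: "P t \<noteq> 0" "Q t \<noteq> 0" using Ppos[OF that] Qpos[OF t] by auto
    show ?thesis unfolding L1_def L2_def
      by (rule derivative_eq_intros dP[OF t] dQ[OF t] d\<alpha>[OF t] dm[OF t] refl | simp add: nz)+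
         (simp add: field_simps power2_eq_square nz)
  qed
  have ineq: "(L1 t)\<^sup>2 + L2 t + p t \<ge> 0" if "a < t" "t < c" for t
  proof -
    have t: "a \<le> t" "t \<le> c" using that by auto
    have "0 \<le> (L1 t)\<^sup>2 + L2 t + ((\<phi>1 t \<bullet> \<phi>3 t)/(\<phi>1 t \<bullet> \<phi>1 t) - 3*(\<phi>1 t \<bullet> \<phi>2 t)\<^sup>2/(\<phi>1 t \<bullet> \<phi>1 t)\<^sup>2
          + 3/2*(\<phi>2 t \<bullet> \<phi>2 t)/(\<phi>1 t \<bullet> \<phi>1 t))/2"
      using algE[of "D t" "\<phi>1 t" "\<phi>2 t" "\<phi>3 t"] Ppos[OF that] Qpos[OF t]
      unfolding L1_def L2_def P_def Q_def by simp
    then show ?thesis using S[OF t] by (rule half_aux)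
  qed
  have eL: "exp (L t) = norm (D t) / sqrt (norm (\<phi>1 t))" if "a < t" "t < c" for t
    unfolding L_def P_def Q_def using expL[OF Dnz'[OF that] nz] that by auto
  have ra: "(f \<longlongrightarrow> f a) (at_right a)" if "isCont f a" for f :: "real \<Rightarrow> 'b::topological_space"
    using that tendsto_mono[OF at_le[of "{a<..}" UNIV]] by (auto simp: isCont_def)
  have a0: "a \<le> a" "a \<le> c" using ac by auto
  have c\<phi>: "(\<phi> \<longlongrightarrow> \<phi> a) (at_right a)"
    by (rule ra) (use has_vector_derivative_continuous[OF d0[OF a0]] in \<open>simp add: continuous_at\<close>)
  have c\<phi>1: "(\<phi>1 \<longlongrightarrow> \<phi>1 a) (at_right a)"
    by (rule ra) (use has_vector_derivative_continuous[OF d1[OF a0]] in \<open>simp add: continuous_at\<close>)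
  have c\<phi>2: "(\<phi>2 \<longlongrightarrow> \<phi>2 a) (at_right a)"
    by (rule ra) (use has_vector_derivative_continuous[OF d2[OF a0]] in \<open>simp add: continuous_at\<close>)
  have cy1: "(y1 \<longlongrightarrow> y1 a) (at_right a)"
    by (rule ra) (rule DERIV_isCont[OF dy1[OF a0]])
  have na: "norm (\<phi>1 a) > 0" using nz[OF a0] by simp
  have ydiv: "((\<lambda>t. y t / (t - a)) \<longlongrightarrow> 1) (at_right a)"
  proof -
    have "((\<lambda>t. (y t - y a) / (t - a)) \<longlongrightarrow> y1 a) (at a)"
      using dy[OF a0] unfolding has_field_derivative_iff .
    then show ?thesis using tendsto_mono[OF at_le[of "{a<..}" UNIV]] by (auto simp: ya y1a)
  qed
  have limz: "((\<lambda>t. exp (L t) / y t) \<longlongrightarrow> K) (at_right a)"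
  proof -
    have lim: "((\<lambda>t. (norm (\<phi> t - \<phi> a) / (t - a)) / sqrt (norm (\<phi>1 t)) / (y t / (t - a)))
          \<longlongrightarrow> norm (\<phi>1 a) / sqrt (norm (\<phi>1 a)) / 1) (at_right a)"
      by (intro tendsto_intros N1 d0[OF a0] c\<phi>1 ydiv) (use na in auto)
    have eq: "norm (\<phi>1 a) / sqrt (norm (\<phi>1 a)) / 1 = K"
      unfolding K_def by (simp add: real_div_sqrt)
    have ev: "\<forall>\<^sub>F t in at_right a. (norm (\<phi> t - \<phi> a) / (t - a)) / sqrt (norm (\<phi>1 t)) / (y t / (t - a))
          = exp (L t) / y t"
      unfolding eventually_at_right_field
      by (intro exI[of _ c]) (use ac in \<open>auto simp: eL D_def div_cancel_aux\<close>)
    show ?thesis using iffD1[OF tendsto_cong[OF ev] lim] unfolding eq .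
  qed
  have limA: "((\<lambda>t. (exp (L t))\<^sup>2 * L1 t) \<longlongrightarrow> 0) (at_right a)"
  proof -
    have "((\<lambda>t. (D t \<bullet> \<phi>1 t) / norm (\<phi>1 t) - (norm (D t))\<^sup>2 * (\<phi>1 t \<bullet> \<phi>2 t) / (2 * (norm (\<phi>1 t))^3))
          \<longlongrightarrow> ((\<phi> a - \<phi> a) \<bullet> \<phi>1 a) / norm (\<phi>1 a) - (norm (\<phi> a - \<phi> a))\<^sup>2 * (\<phi>1 a \<bullet> \<phi>2 a) / (2 * (norm (\<phi>1 a))^3))
          (at_right a)"
      unfolding D_def by (intro tendsto_intros c\<phi> c\<phi>1 c\<phi>2) (use na in auto)
    moreover have "\<forall>\<^sub>F t in at_right a. (D t \<bullet> \<phi>1 t) / norm (\<phi>1 t) - (norm (D t))\<^sup>2 * (\<phi>1 t \<bullet> \<phi>2 t) / (2 * (norm (\<phi>1 t))^3)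
          = (exp (L t))\<^sup>2 * L1 t"
      unfolding eventually_at_right_field
    proof (intro exI[of _ c] conjI allI impI ac)
      fix t assume t: "a < t" "t < c"
      have n1: "norm (\<phi>1 t) > 0" "norm (D t) > 0" using nz[of t] Dnz'[OF t] t by auto
      show "(D t \<bullet> \<phi>1 t) / norm (\<phi>1 t) - (norm (D t))\<^sup>2 * (\<phi>1 t \<bullet> \<phi>2 t) / (2 * (norm (\<phi>1 t))^3)
          = (exp (L t))\<^sup>2 * L1 t"
        unfolding eL[OF t] L1_def P_def Q_def power2_norm_eq_inner[symmetric]
        using n1 by (simp add: field_simps power2_eq_square power3_eq_cube)
    qed
    ultimately show ?thesis by (auto intro: tendsto_cong[THEN iffD1])
  qed
  have limB: "((\<lambda>t. exp (L t)) \<longlongrightarrow> 0) (at_right a)"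
  proof -
    have "((\<lambda>t. norm (D t) / sqrt (norm (\<phi>1 t))) \<longlongrightarrow> norm (\<phi> a - \<phi> a) / sqrt (norm (\<phi>1 a))) (at_right a)"
      unfolding D_def by (intro tendsto_intros c\<phi> c\<phi>1) (use na in auto)
    moreover have "\<forall>\<^sub>F t in at_right a. norm (D t) / sqrt (norm (\<phi>1 t)) = exp (L t)"
      unfolding eventually_at_right_field
      by (intro exI[of _ c]) (use ac eL in auto)
    ultimately show ?thesis by (auto intro: tendsto_cong[THEN iffD1])
  qed
  have main: "K * y t \<le> norm (D t) / sqrt (norm (\<phi>1 t))" if "a < t" "t < c" for t
    using sturmB[OF ac dL dL1 dy dy1 ineq ypos limz _ limA limB cy1 that] eL[OF that] na
    unfolding K_def by auto
  have c0: "a \<le> c" "c \<le> c" using ac by auto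
  have limc: "((\<lambda>t. norm (D t) / sqrt (norm (\<phi>1 t)) - K * y t) \<longlongrightarrow> norm (D c) / sqrt (norm (\<phi>1 c)) - K * y c) (at_left c)"
  proof -
    have "isCont (\<lambda>t. norm (D t) / sqrt (norm (\<phi>1 t)) - K * y t) c"
      unfolding D_def
      using has_vector_derivative_continuous[OF d0[OF c0]] has_vector_derivative_continuous[OF d1[OF c0]]
        DERIV_isCont[OF dy[OF c0]] nz[OF c0]
      by (intro continuous_intros) (auto simp: continuous_at isCont_def)
    then show ?thesis using tendsto_mono[OF at_le[of "{..<c}" UNIV]] by (auto simp: isCont_def)
  qed
  have "0 \<le> norm (D c) / sqrt (norm (\<phi>1 c)) - K * y c"
  proof (rule tendsto_le[OF _ limc tendsto_const])
    show "\<forall>\<^sub>F t in at_left c. 0 \<le> norm (D t) / sqrt (norm (\<phi>1 t)) - K * y t"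
      unfolding eventually_at_left_field
      by (intro exI[of _ a]) (use ac main in auto)
  qed simp
  then show ?thesis unfolding K_def D_def by simp
qed

lemma coreD:
  fixes \<phi> \<phi>1 \<phi>2 \<phi>3 :: "real \<Rightarrow> 'a::real_inner" and y y1 p :: "real \<Rightarrow> real"
  assumes ab: "a < b"
    and d0: "\<And>t. a \<le> t \<Longrightarrow> t \<le> b \<Longrightarrow> (\<phi> has_vector_derivative \<phi>1 t) (at t)"
    and d1: "\<And>t. a \<le> t \<Longrightarrow> t \<le> b \<Longrightarrow> (\<phi>1 has_vector_derivative \<phi>2 t) (at t)"
    and d2: "\<And>t. a \<le> t \<Longrightarrow> t \<le> b \<Longrightarrow> (\<phi>2 has_vector_derivative \<phi>3 t) (at t)"
    and nz: "\<And>t. a \<le> t \<Longrightarrow> t \<le> b \<Longrightarrow> \<phi>1 t \<noteq> 0"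
    and S: "\<And>t. a \<le> t \<Longrightarrow> t \<le> b \<Longrightarrow>
        (\<phi>1 t \<bullet> \<phi>3 t)/(\<phi>1 t \<bullet> \<phi>1 t) - 3*(\<phi>1 t \<bullet> \<phi>2 t)\<^sup>2/(\<phi>1 t \<bullet> \<phi>1 t)\<^sup>2
          + 3/2*(\<phi>2 t \<bullet> \<phi>2 t)/(\<phi>1 t \<bullet> \<phi>1 t) \<le> 2 * p t"
    and dy: "\<And>t. a \<le> t \<Longrightarrow> t \<le> b \<Longrightarrow> (y has_real_derivative y1 t) (at t)"
    and dy1: "\<And>t. a \<le> t \<Longrightarrow> t \<le> b \<Longrightarrow> (y1 has_real_derivative - p t * y t) (at t)"
    and ya: "y a = 0" and y1a: "y1 a = 1"
    and ypos: "\<And>t. a < t \<Longrightarrow> t \<le> b \<Longrightarrow> y t > 0"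
  shows "norm (\<phi> b - \<phi> a) / sqrt (norm (\<phi>1 a) * norm (\<phi>1 b)) \<ge> y b"
proof -
  have core: "norm (\<phi> c - \<phi> a) / sqrt (norm (\<phi>1 c)) \<ge> sqrt (norm (\<phi>1 a)) * y c"
    if "a < c" "c \<le> b" "\<And>t. a < t \<Longrightarrow> t < c \<Longrightarrow> \<phi> t \<noteq> \<phi> a" for c
    by (rule coreC[where ?\<phi>1.0=\<phi>1 and ?\<phi>2.0=\<phi>2 and ?\<phi>3.0=\<phi>3 and p=p and ?y1.0=y1])
       (use that assms in auto)
  have a0: "a \<le> a" "a \<le> b" using ab by auto
  have na: "norm (\<phi>1 a) > 0" using nz[OF a0] by simp
  have "\<forall>\<^sub>F t in at_right a. 0 < norm (\<phi> t - \<phi> a) / (t - a)"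
    by (rule order_tendstoD(1)[OF N1[OF d0[OF a0]] na])
  then obtain e where e: "e > a" "\<And>t. a < t \<Longrightarrow> t < e \<Longrightarrow> 0 < norm (\<phi> t - \<phi> a) / (t - a)"
    unfolding eventually_at_right_field by auto
  have nozero: "\<phi> t \<noteq> \<phi> a" if "a < t" "t < b" for t
  proof
    assume t1: "\<phi> t = \<phi> a"
    define e0 where "e0 = min (a + (e - a)/2) t"
    have e0: "a < e0" "e0 \<le> t" "e0 < e" unfolding e0_def using e(1) that by (auto simp: min_def field_simps)
    define Z where "Z = {x \<in> {e0..b}. \<phi> x - \<phi> a = 0}"
    have cont: "continuous_on {e0..b} (\<lambda>x. \<phi> x - \<phi> a)"
      using e0 by (intro continuous_at_imp_continuous_on ballI continuous_intros
          has_vector_derivative_continuous[OF d0]) auto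
    have cl: "closed Z" unfolding Z_def
      by (rule continuous_closed_preimage_constant[OF cont closed_atLeastAtMost])
    have tZ: "t \<in> Z" using t1 e0 that by (auto simp: Z_def)
    have bb: "bdd_below Z" by (auto simp: Z_def bdd_below_def)
    define t0 where "t0 = Inf Z"
    have t0Z: "t0 \<in> Z" unfolding t0_def using closed_contains_Inf[OF _ bb cl] tZ by auto
    then have t0: "e0 \<le> t0" "t0 \<le> b" "\<phi> t0 = \<phi> a" by (auto simp: Z_def)
    have nz0: "\<phi> s \<noteq> \<phi> a" if "a < s" "s < t0" for s
    proof (cases "s < e0")
      case True
      then show ?thesis using e(2)[of s] that e0 by auto
    next
      case False
      show ?thesis
      proof
        assume "\<phi> s = \<phi> a"
        then have "s \<in> Z" using False that t0 by (auto simp: Z_def)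
        then have "t0 \<le> s" unfolding t0_def by (rule cInf_lower[OF _ bb])
        then show False using that by simp
      qed
    qed
    have "norm (\<phi> t0 - \<phi> a) / sqrt (norm (\<phi>1 t0)) \<ge> sqrt (norm (\<phi>1 a)) * y t0"
      by (rule core) (use t0 e0 nz0 in auto)
    moreover have "sqrt (norm (\<phi>1 a)) * y t0 > 0"
      using na ypos[of t0] t0 e0 by auto
    ultimately show False using t0 by simp
  qed
  have "norm (\<phi> b - \<phi> a) / sqrt (norm (\<phi>1 b)) \<ge> sqrt (norm (\<phi>1 a)) * y b"
    by (rule core) (use ab nozero in auto)
  moreover have "sqrt (norm (\<phi>1 a)) > 0" using na by simp
  ultimately show ?thesis
  proof -
    assume h: "sqrt (norm (\<phi>1 a)) * y b \<le> norm (\<phi> b - \<phi> a) / sqrt (norm (\<phi>1 b))"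
      and sa: "sqrt (norm (\<phi>1 a)) > 0"
    have e: "norm (\<phi> b - \<phi> a) / sqrt (norm (\<phi>1 a) * norm (\<phi>1 b))
        = (norm (\<phi> b - \<phi> a) / sqrt (norm (\<phi>1 b))) / sqrt (norm (\<phi>1 a))"
      by (simp add: real_sqrt_mult mult.commute)
    show ?thesis unfolding e pos_le_divide_eq[OF sa] using h by (simp add: mult.commute)
  qed
qed

definition hh :: "real \<Rightarrow> real" where "hh t = 1/2 * ln ((1 + t) / (1 - t))"

lemma dhh: "-1 < t \<Longrightarrow> t < 1 \<Longrightarrow> (hh has_real_derivative 1 / (1 - t\<^sup>2)) (at t)"
proof -
  assume t: "-1 < t" "t < 1"
  then have nz: "1 - t \<noteq> 0" "1 + t \<noteq> 0" "(1 + t) / (1 - t) > 0" by auto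
  have "t\<^sup>2 < 1" using t by (simp add: abs_square_less_1 abs_less_iff)
  then have f1: "1 - t*t \<noteq> 0" "4 - t*4 \<noteq> 0" using t by (auto simp: power2_eq_square)
  have fx: "(4 - t * 4) / (4 + t * (t * (t * 4)) - (t * 4 + t * (t * 4))) = 1 / (1 - t * t)"
  proof -
    have "4 + t * (t * (t * 4)) - (t * 4 + t * (t * 4)) = (4 - t*4)*(1 - t*t)" by algebra
    then show ?thesis using f1 by simp
  qed
  have e: "1 - t\<^sup>2 = (1 - t) * (1 + t)" by (simp add: algebra_simps power2_eq_square)
  show ?thesis unfolding hh_def e
    using nz by (auto intro!: derivative_eq_intros simp: field_simps fx)
qed

lemma dsq: "-1 < t \<Longrightarrow> t < 1 \<Longrightarrow> ((\<lambda>t. sqrt (1 - t\<^sup>2)) has_real_derivative - t / sqrt (1 - t\<^sup>2)) (at t)"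
proof -
  assume t: "-1 < t" "t < 1"
  then have p: "1 - t\<^sup>2 > 0" by (simp add: abs_square_less_1)
  show ?thesis
    using p by (auto intro!: derivative_eq_intros simp: field_simps power2_eq_square)
qed

lemma hh_mono: "-1 < a \<Longrightarrow> a < t \<Longrightarrow> t < 1 \<Longrightarrow> hh a < hh t"
proof -
  assume h: "-1 < a" "a < t" "t < 1"
  have "(1 + a) * (1 - t) < (1 + t) * (1 - a)" using h by (simp add: algebra_simps)
  then have "(1 + a) / (1 - a) < (1 + t) / (1 - t)" using h by (simp add: divide_simps)
  moreover have "(1 + a) / (1 - a) > 0" using h by simp
  ultimately show ?thesis unfolding hh_def by simp
qed

definition gg :: "real \<Rightarrow> real" where "gg t = sqrt (1 - t\<^sup>2)"

lemma gg_pos: "-1 < t \<Longrightarrow> t < 1 \<Longrightarrow> gg t > 0"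
  unfolding gg_def by (simp add: abs_square_less_1 abs_less_iff)

lemma gg_sq: "-1 < t \<Longrightarrow> t < 1 \<Longrightarrow> 1 - t\<^sup>2 = gg t * gg t"
proof -
  assume "-1 < t" "t < 1"
  then have "1 - t\<^sup>2 > 0" by (simp add: abs_square_less_1 abs_less_iff)
  then show ?thesis unfolding gg_def by (simp add: real_sqrt_mult[symmetric])
qed

lemma dgg: "-1 < t \<Longrightarrow> t < 1 \<Longrightarrow> (gg has_real_derivative - t / gg t) (at t)"
  unfolding gg_def by (rule dsq)

lemma dyB:
  assumes t: "-1 < t" "t < 1"
  shows "((\<lambda>t. C * gg t * (hh t - hh a)) has_real_derivative
     C * (1 - t * (hh t - hh a)) / gg t) (at t)"
proof -
  have g: "gg t > 0" "1 - t\<^sup>2 = gg t * gg t" using gg_pos[OF t] gg_sq[OF t] by auto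
  show ?thesis
    apply (rule derivative_eq_intros dgg[OF t] dhh[OF t] refl)+
    unfolding g(2) using g(1)
    by (simp add: field_simps)
qed

lemma dyB1:
  assumes t: "-1 < t" "t < 1"
  shows "((\<lambda>t. C * (1 - t * (hh t - hh a)) / gg t) has_real_derivative
     - (1 / (1 - t\<^sup>2)\<^sup>2) * (C * gg t * (hh t - hh a))) (at t)"
proof -
  have g: "gg t > 0" "1 - t\<^sup>2 = gg t * gg t" using gg_pos[OF t] gg_sq[OF t] by auto
  have gnz: "gg t \<noteq> 0" using g by simp
  show ?thesis
    apply (rule derivative_eq_intros dgg[OF t] dhh[OF t] refl gnz)+
    unfolding g(2) using g(1) apply (simp add: field_simps power2_eq_square)
    using g(2) unfolding power2_eq_square by algebra
qed

lemma vd_eq: "vd f x = vector_derivative f (at x)" by (simp add: vd_def)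

lemma C3_derivs:
  fixes \<phi> :: "real \<Rightarrow> 'a::real_normed_vector"
  assumes "C3_on \<phi> S" "x \<in> S"
  shows "(\<phi> has_vector_derivative vd \<phi> x) (at x)"
    "(vd \<phi> has_vector_derivative vd (vd \<phi>) x) (at x)"
    "(vd (vd \<phi>) has_vector_derivative vd (vd (vd \<phi>)) x) (at x)"
  using assms unfolding C3_on_def vd_eq[of _ x]
  by (auto intro!: vector_derivative_works[THEN iffD1])

lemma S_eq:
  "ahlfors_S1 \<phi> x = (vd \<phi> x \<bullet> vd (vd (vd \<phi>)) x)/(vd \<phi> x \<bullet> vd \<phi> x)
     - 3*(vd \<phi> x \<bullet> vd (vd \<phi>) x)\<^sup>2/(vd \<phi> x \<bullet> vd \<phi> x)\<^sup>2
     + 3/2*(vd (vd \<phi>) x \<bullet> vd (vd \<phi>) x)/(vd \<phi> x \<bullet> vd \<phi> x)"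
proof -
  have 4: "(norm v)^4 = (v \<bullet> v)\<^sup>2" for v :: 'a
    by (simp add: power2_norm_eq_inner[symmetric] power_mult[symmetric])
  show ?thesis unfolding ahlfors_S1_def Let_def 4 power2_norm_eq_inner ..
qed

theorem mainTheorem4:
  fixes \<phi> :: "real \<Rightarrow> real ^ 'n"
  assumes C3: "C3_on \<phi> {-1<..<1}"
    and nz: "\<forall>x\<in>{-1<..<1}. vd \<phi> x \<noteq> 0"
  shows "((\<forall>x\<in>{-1<..<1}. ahlfors_S1 \<phi> x \<le> pi\<^sup>2 / 2) \<longrightarrow>
          (\<forall>x1\<in>{-1<..<1}. \<forall>x2\<in>{-1<..<1}.
             norm (\<phi> x1 - \<phi> x2) / sqrt (norm (vd \<phi> x1) * norm (vd \<phi> x2))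
               \<ge> 2 / pi * sin (pi / 2 * \<bar>x1 - x2\<bar>)))
       \<and> ((\<forall>x\<in>{-1<..<1}. ahlfors_S1 \<phi> x \<le> 2 / (1 - x\<^sup>2)\<^sup>2) \<longrightarrow>
          (\<forall>x1\<in>{-1<..<1}. \<forall>x2\<in>{-1<..<1}.
             norm (\<phi> x1 - \<phi> x2) / sqrt (norm (vd \<phi> x1) * norm (vd \<phi> x2))
               \<ge> sqrt ((1 - x1\<^sup>2) * (1 - x2\<^sup>2)) * hdist x1 x2))"
proof -
  define F where "F x1 x2 = norm (\<phi> x1 - \<phi> x2) / sqrt (norm (vd \<phi> x1) * norm (vd \<phi> x2))" for x1 x2
  have Fsym: "F x1 x2 = F x2 x1" for x1 x2
    unfolding F_def by (simp add: norm_minus_commute mult.commute)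
  have Fb: "F b a = norm (\<phi> b - \<phi> a) / sqrt (norm (vd \<phi> a) * norm (vd \<phi> b))" for a b
    unfolding F_def by (simp add: mult.commute)
  note D = C3_derivs[OF C3]
  have gen: "y b \<le> F b a"
    if ab: "a < b" "-1 < a" "b < 1"
      and Sb: "\<And>x. -1 < x \<Longrightarrow> x < 1 \<Longrightarrow> ahlfors_S1 \<phi> x \<le> 2 * p x"
      and dy: "\<And>t. a \<le> t \<Longrightarrow> t \<le> b \<Longrightarrow> (y has_real_derivative y1 t) (at t)"
      and dy1: "\<And>t. a \<le> t \<Longrightarrow> t \<le> b \<Longrightarrow> (y1 has_real_derivative - p t * y t) (at t)"
      and ya: "y a = 0" and y1a: "y1 a = 1"
      and ypos: "\<And>t. a < t \<Longrightarrow> t \<le> b \<Longrightarrow> y t > 0"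
    for y y1 p :: "real \<Rightarrow> real" and a b :: real
    unfolding Fb
  proof (rule coreD[where ?\<phi>1.0="vd \<phi>" and ?\<phi>2.0="vd (vd \<phi>)" and ?\<phi>3.0="vd (vd (vd \<phi>))"
        and p=p and ?y1.0=y1, OF ab(1) _ _ _ _ _ dy dy1 ya y1a ypos])
    fix t assume t: "a \<le> t" "t \<le> b"
    then have tI: "t \<in> {-1<..<1}" using ab by auto
    show "(\<phi> has_vector_derivative vd \<phi> t) (at t)" by (rule D(1)[OF tI])
    show "(vd \<phi> has_vector_derivative vd (vd \<phi>) t) (at t)" by (rule D(2)[OF tI])
    show "(vd (vd \<phi>) has_vector_derivative vd (vd (vd \<phi>)) t) (at t)" by (rule D(3)[OF tI])
    show "vd \<phi> t \<noteq> 0" using nz tI by auto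
    show "vd \<phi> t \<bullet> vd (vd (vd \<phi>)) t / (vd \<phi> t \<bullet> vd \<phi> t) -
          3 * (vd \<phi> t \<bullet> vd (vd \<phi>) t)\<^sup>2 / (vd \<phi> t \<bullet> vd \<phi> t)\<^sup>2 +
          3 / 2 * (vd (vd \<phi>) t \<bullet> vd (vd \<phi>) t) / (vd \<phi> t \<bullet> vd \<phi> t) \<le> 2 * p t"
      using Sb[of t] tI unfolding S_eq by auto
  qed
  show ?thesis
  proof (intro conjI impI)
    assume H: "\<forall>x\<in>{-1<..<1}. ahlfors_S1 \<phi> x \<le> pi\<^sup>2 / 2"
    have key: "2 / pi * sin (pi / 2 * (b - a)) \<le> F b a" if "a < b" "-1 < a" "b < 1" for a b
    proof (rule gen[where p="\<lambda>t. pi\<^sup>2/4" and ?y1.0="\<lambda>t. cos (pi/2 * (t - a))", OF that])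
      show "ahlfors_S1 \<phi> x \<le> 2 * (pi\<^sup>2/4)" if "-1 < x" "x < 1" for x
        using H that by auto
      show "((\<lambda>t. 2 / pi * sin (pi / 2 * (t - a))) has_real_derivative cos (pi/2 * (t - a))) (at t)" for t
        by (rule derivative_eq_intros refl | simp)+
      show "((\<lambda>t. cos (pi/2 * (t - a))) has_real_derivative - (pi\<^sup>2/4) * (2 / pi * sin (pi / 2 * (t - a)))) (at t)" for t
        by (rule derivative_eq_intros refl | simp)+ (simp add: power2_eq_square)
      show "2 / pi * sin (pi / 2 * (t - a)) > 0" if "a < t" "t \<le> b" for t
      proof -
        have h1: "0 < pi/2*(t-a)" using that by simp
        have h2: "pi/2*(t-a) < pi/2*2" using that \<open>-1 < a\<close> \<open>b < 1\<close>
          by (intro mult_strict_left_mono) auto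
        have "sin (pi/2*(t-a)) > 0" using h1 h2 by (intro sin_gt_zero) auto
        then show ?thesis by simp
      qed
    qed simp_all
    show "\<forall>x1\<in>{-1<..<1}. \<forall>x2\<in>{-1<..<1}. norm (\<phi> x1 - \<phi> x2) / sqrt (norm (vd \<phi> x1) * norm (vd \<phi> x2))
               \<ge> 2 / pi * sin (pi / 2 * \<bar>x1 - x2\<bar>)"
    proof (intro ballI)
      fix x1 x2 :: real assume x: "x1 \<in> {-1<..<1}" "x2 \<in> {-1<..<1}"
      have "2 / pi * sin (pi / 2 * \<bar>x1 - x2\<bar>) \<le> F x1 x2"
      proof (cases x1 x2 rule: linorder_cases)
        case less then show ?thesis using key[of x1 x2] x Fsym by (simp add: abs_if)
      next
        case equal then show ?thesis by (simp add: F_def)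
      next
        case greater then show ?thesis using key[of x2 x1] x by (simp add: abs_if)
      qed
      then show "norm (\<phi> x1 - \<phi> x2) / sqrt (norm (vd \<phi> x1) * norm (vd \<phi> x2))
               \<ge> 2 / pi * sin (pi / 2 * \<bar>x1 - x2\<bar>)" by (simp add: F_def)
    qed
  next
    assume H: "\<forall>x\<in>{-1<..<1}. ahlfors_S1 \<phi> x \<le> 2 / (1 - x\<^sup>2)\<^sup>2"
    have key: "sqrt (1 - a\<^sup>2) * gg b * (hh b - hh a) \<le> F b a" if "a < b" "-1 < a" "b < 1" for a b
    proof (rule gen[where p="\<lambda>t. 1 / (1 - t\<^sup>2)\<^sup>2"
          and ?y1.0="\<lambda>t. sqrt (1 - a\<^sup>2) * (1 - t * (hh t - hh a)) / gg t", OF that])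
      show "ahlfors_S1 \<phi> x \<le> 2 * (1 / (1 - x\<^sup>2)\<^sup>2)" if "-1 < x" "x < 1" for x
        using H that by auto
      show "((\<lambda>t. sqrt (1 - a\<^sup>2) * gg t * (hh t - hh a)) has_real_derivative
          sqrt (1 - a\<^sup>2) * (1 - t * (hh t - hh a)) / gg t) (at t)" if "a \<le> t" "t \<le> b" for t
        by (rule dyB) (use that \<open>-1 < a\<close> \<open>b < 1\<close> in auto)
      show "((\<lambda>t. sqrt (1 - a\<^sup>2) * (1 - t * (hh t - hh a)) / gg t) has_real_derivative
          - (1 / (1 - t\<^sup>2)\<^sup>2) * (sqrt (1 - a\<^sup>2) * gg t * (hh t - hh a))) (at t)" if "a \<le> t" "t \<le> b" for t
        by (rule dyB1) (use that \<open>-1 < a\<close> \<open>b < 1\<close> in auto)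
      have "a\<^sup>2 < 1" using that by (simp add: abs_square_less_1 abs_less_iff)
      then show "sqrt (1 - a\<^sup>2) * (1 - a * (hh a - hh a)) / gg a = 1" by (simp add: gg_def)
      show "sqrt (1 - a\<^sup>2) * gg t * (hh t - hh a) > 0" if "a < t" "t \<le> b" for t
      proof -
        have "a\<^sup>2 < 1" using that \<open>-1 < a\<close> \<open>b < 1\<close> by (simp_all add: abs_square_less_1 abs_less_iff)
        moreover have "gg t > 0" using gg_pos that \<open>-1 < a\<close> \<open>b < 1\<close> by auto
        moreover have "hh a < hh t" using hh_mono that \<open>-1 < a\<close> \<open>b < 1\<close> by auto
        ultimately show ?thesis by simp
      qed
    qed simp
    show "\<forall>x1\<in>{-1<..<1}. \<forall>x2\<in>{-1<..<1}. norm (\<phi> x1 - \<phi> x2) / sqrt (norm (vd \<phi> x1) * norm (vd \<phi> x2))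
               \<ge> sqrt ((1 - x1\<^sup>2) * (1 - x2\<^sup>2)) * hdist x1 x2"
    proof (intro ballI)
      fix x1 x2 :: real assume x: "x1 \<in> {-1<..<1}" "x2 \<in> {-1<..<1}"
      have hd: "hdist x1 x2 = \<bar>hh x1 - hh x2\<bar>" by (simp add: hdist_def hh_def)
      have "sqrt ((1 - x1\<^sup>2) * (1 - x2\<^sup>2)) * hdist x1 x2 \<le> F x1 x2"
      proof (cases x1 x2 rule: linorder_cases)
        case less
        then have "hh x1 < hh x2" using hh_mono x by auto
        then show ?thesis using key[of x1 x2] x less Fsym by (simp add: hd real_sqrt_mult gg_def)
      next
        case equal then show ?thesis by (simp add: F_def hdist_def)
      next
        case greater
        then have "hh x2 < hh x1" using hh_mono x by auto
        then show ?thesis using key[of x2 x1] x greater by (simp add: hd real_sqrt_mult gg_def mult.commute)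
      qed
      then show "norm (\<phi> x1 - \<phi> x2) / sqrt (norm (vd \<phi> x1) * norm (vd \<phi> x2))
               \<ge> sqrt ((1 - x1\<^sup>2) * (1 - x2\<^sup>2)) * hdist x1 x2" by (simp add: F_def)
    qed
  qed
qed

end
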